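(* Let $\Omega\subset\mathbb{R}^d$ be nonempty, convex and compact with diameter $D$ (i.e. $\|x-y\|\le D$ for all $x,y\in\Omega$). Let $z$ be a random variable with distribution $\mathcal{P}$ supported on $\Xi\subset\mathbb{R}^p$, let $f(\cdot,z)$ be differentiable for each $z\in\Xi$ with $\|\nabla f(x,z)\|\le G$ for all $x\in\Omega$, $z\in\Xi$, and let $F(x)=\mathbb{E}_z[f(x,z)]$ be differentiable with $\nabla F(x)=\mathbb{E}_z[\nabla f(x,z)]$ and $L$-smooth on $\Omega$. Let $x^*\in\arg\min_{x\in\Omega}F(x)$, $x_0\in\Omega$, $T\ge 1$ an integer and $\beta\ge \frac{2(F(x_0)-F(x^* ))}{LD^2}$, $\beta>0$. Run the algorithm SFW (defined in the context) with constant step size $\gamma_t=\gamma=\sqrt{\frac{2(F(x_0)-F(x^* ))}{TLD^2\beta}}$ and minibatch sizes $b_t=b=T$ for all $t\in\{0,\dots,T-1\}$. Then its output $x_a$ satisfies $$\mathbb{E}[\mathcal{G}(x_a)]\le \frac{D}{\sqrt{T}}\left(G+\sqrt{\frac{2L(F(x_0)-F(x^* ))}{\beta}}\,(1+\beta)\right).$$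
   Context: $F$ is $L$-smooth on $\Omega$ means $\|\nabla F(x)-\nabla F(y)\|\le L\|x-y\|$ for all $x,y\in\Omega$; $\|\cdot\|$ is the Euclidean norm. The Frank–Wolfe gap is $\mathcal{G}(x)=\max_{v\in\Omega}\langle v-x,-\nabla F(x)\rangle$. Algorithm SFW (input $x_0\in\Omega$, $T$, step sizes $\gamma_t\in[0,1]$, minibatch sizes $b_t$): for $t=0,\dots,T-1$, draw i.i.d. samples $z_1^t,\dots,z_{b_t}^t\sim\mathcal{P}$ (independent of everything before), compute $v_t\in\arg\max_{v\in\Omega}\langle v,-\frac{1}{b_t}\sum_{i=1}^{b_t}\nabla f(x_t,z_i^t)\rangle$, and set $x_{t+1}=x_t+\gamma_t(v_t-x_t)$. The output $x_a$ is chosen uniformly at random from $\{x_0,\dots,x_{T-1}\}$. The expectation is over all randomness of the algorithm. *)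

theory Defs
  imports "HOL-Probability.Probability"
begin

definition fw_gap :: "('a::real_inner) set \<Rightarrow> ('a \<Rightarrow> 'a) \<Rightarrow> 'a \<Rightarrow> real" where
  "fw_gap \<Omega> gF x = (SUP v\<in>\<Omega>. inner (v - x) (- gF x))"

text \<open>The sample outcome omega assigns to (t,i) the i-th sample
  z_i^t of round t.  lmo t c is the chosen maximiser of <v, c> over Omega used in
  round t; gf x z is the stochastic gradient of f(.,z) at x.\<close>
fun sfw_iter :: "(nat \<Rightarrow> 'a \<Rightarrow> 'a) \<Rightarrow> ('a \<Rightarrow> 'z \<Rightarrow> 'a) \<Rightarrow> 'a \<Rightarrow> (nat \<Rightarrow> real)
    \<Rightarrow> (nat \<Rightarrow> nat) \<Rightarrow> (nat \<times> nat \<Rightarrow> 'z) \<Rightarrow> nat \<Rightarrow> 'a::real_vector" where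
  "sfw_iter lmo gf x0 \<gamma> b \<omega> 0 = x0"
| "sfw_iter lmo gf x0 \<gamma> b \<omega> (Suc t) =
     (let x = sfw_iter lmo gf x0 \<gamma> b \<omega> t;
          g = (1 / real (b t)) *\<^sub>R (\<Sum>i<b t. gf x (\<omega> (t, i)))
      in x + \<gamma> t *\<^sub>R (lmo t (- g) - x))"

definition sfw_samples :: "nat \<Rightarrow> (nat \<Rightarrow> nat) \<Rightarrow> 'z measure \<Rightarrow> (nat \<times> nat \<Rightarrow> 'z) measure" where
  "sfw_samples T b P = PiM (SIGMA t:{..<T}. {..<b t}) (\<lambda>_. P)"

end

theory Submission
  imports Defs
begin


lemma prod_two_ifs:
  assumes "finite J" "j \<in> J" "l \<in> J"
  shows "(\<Prod>i\<in>J. (if i = j then a i else 1) * (if i = l then b i else (1::real))) = a j * b l"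
  using assms by (simp add: prod.distrib prod.delta)

lemma sum_sq_indep:
  fixes P :: "'z measure" and u :: "'z \<Rightarrow> real" and J :: "'i set"
  assumes P: "prob_space P" and J: "finite J"
    and um: "u \<in> borel_measurable P" and ub: "AE z in P. \<bar>u z\<bar> \<le> B"
    and u0: "(\<integral>z. u z \<partial>P) = 0"
  shows "integrable (PiM J (\<lambda>_. P)) (\<lambda>y. (\<Sum>j\<in>J. u (y j))\<^sup>2)"
    and "(\<integral>y. (\<Sum>j\<in>J. u (y j))\<^sup>2 \<partial>PiM J (\<lambda>_. P)) = real (card J) * (\<integral>z. (u z)\<^sup>2 \<partial>P)"
proof -
  interpret PS: prob_space P by fact
  interpret product_sigma_finite "\<lambda>_::'i. P"
    unfolding product_sigma_finite_def using PS.sigma_finite_measure_axioms by simp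
  have iu: "integrable P u" by (rule PS.integrable_const_bound[OF _ um]) (use ub in auto)
  have iu2: "integrable P (\<lambda>z. (u z)\<^sup>2)"
    proof (rule PS.integrable_const_bound[where B="B\<^sup>2"])
    show "AE x in P. norm ((u x)\<^sup>2) \<le> B\<^sup>2"
      using ub by eventually_elim (metis abs_le_square_iff abs_ge_self order_trans real_norm_def abs_power2)
  qed (use um in auto)
  define f :: "'i \<Rightarrow> 'i \<Rightarrow> 'i \<Rightarrow> 'z \<Rightarrow> real" where "f j l i z = (if i = j then u z else 1) * (if i = l then u z else 1)" for j l i z
  have fi: "integrable P (f j l i)" for j l i
    using iu iu2 unfolding f_def by (cases "i = j"; cases "i = l") (auto simp: power2_eq_square)
  have fint: "integral\<^sup>L P (f j l i) = (if i = j \<and> i = l then (\<integral>z. (u z)\<^sup>2 \<partial>P) else if i = j \<or> i = l then 0 else 1)" for j l i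
    using u0 unfolding f_def by (cases "i = j"; cases "i = l") (auto simp: power2_eq_square PS.prob_space)
  have sq: "(\<Sum>j\<in>J. u (y j))\<^sup>2 = (\<Sum>j\<in>J. \<Sum>l\<in>J. (\<Prod>i\<in>J. f j l i (y i)))" for y
    unfolding power2_eq_square sum_product f_def by (intro sum.cong refl prod_two_ifs[symmetric] J)
  have pint: "integrable (PiM J (\<lambda>_. P)) (\<lambda>y. \<Prod>i\<in>J. f j l i (y i))" for j l
    by (rule product_integrable_prod) (use J fi in auto)
  show "integrable (PiM J (\<lambda>_. P)) (\<lambda>y. (\<Sum>j\<in>J. u (y j))\<^sup>2)"
    unfolding sq by (auto intro!: Bochner_Integration.integrable_sum pint)
  have "(\<integral>y. (\<Sum>j\<in>J. u (y j))\<^sup>2 \<partial>PiM J (\<lambda>_. P)) = (\<Sum>j\<in>J. \<Sum>l\<in>J. \<Prod>i\<in>J. integral\<^sup>L P (f j l i))"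
    unfolding sq by (simp add: integral_sum pint integrable_sum product_integral_prod J fi)
  also have "\<dots> = (\<Sum>j\<in>J. \<Sum>l\<in>J. if j = l then (\<integral>z. (u z)\<^sup>2 \<partial>P) else 0)"
  proof (intro sum.cong refl)
    fix j l assume jl: "j \<in> J" "l \<in> J"
    show "(\<Prod>i\<in>J. integral\<^sup>L P (f j l i)) = (if j = l then (\<integral>z. (u z)\<^sup>2 \<partial>P) else 0)"
    proof (cases "j = l")
      case True
      have "(\<Prod>i\<in>J. integral\<^sup>L P (f j l i)) = (\<Prod>i\<in>J. if i = j then (\<integral>z. (u z)\<^sup>2 \<partial>P) else 1)"
        using True by (intro prod.cong refl) (simp add: fint)
      then show ?thesis using J jl True by simp
    next
      case False
      then show ?thesis using J jl by (auto simp: fint intro!: prod_zero bexI[of _ j])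
    qed
  qed
  also have "\<dots> = real (card J) * (\<integral>z. (u z)\<^sup>2 \<partial>P)"
    using J by simp
  finally show "(\<integral>y. (\<Sum>j\<in>J. u (y j))\<^sup>2 \<partial>PiM J (\<lambda>_. P)) = real (card J) * (\<integral>z. (u z)\<^sup>2 \<partial>P)" .
qed



lemma vec_mean_dev:
  fixes P :: "'z measure" and g :: "'z \<Rightarrow> real^'d" and J :: "'i set"
  assumes P: "prob_space P" and J: "finite J" and Jne: "J \<noteq> {}"
    and gm: "g \<in> borel_measurable P" and gb: "AE z in P. norm (g z) \<le> B"
  shows "(\<integral>y. norm ((\<integral>z. g z \<partial>P) - (1 / real (card J)) *\<^sub>R (\<Sum>j\<in>J. g (y j))) \<partial>PiM J (\<lambda>_. P))
           \<le> B / sqrt (real (card J))"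
proof -
  interpret PS: prob_space P by fact
  interpret PJ: prob_space "PiM J (\<lambda>_. P)" by (rule prob_space_PiM) (rule P)
  define m where "m = (\<integral>z. g z \<partial>P)"
  define n where "n = real (card J)"
  have n0: "n > 0" using J Jne by (simp add: n_def card_gt_0_iff)
  have B0: "B \<ge> 0"
  proof -
    have "AE z in P. 0 \<le> B" using gb by eventually_elim (meson norm_ge_zero order_trans)
    then show ?thesis by simp
  qed
  have gi: "integrable P g" by (rule PS.integrable_const_bound[OF gb gm])
  define u where "u k z = (g z - m) $ k" for k z
  have gm'[measurable]: "g \<in> borel_measurable P" by (rule gm)
  have gkm[measurable]: "(\<lambda>z. g z $ k) \<in> borel_measurable P" for k
    by (rule measurable_compose[OF gm, of "\<lambda>v. v $ k"]) (intro borel_measurable_continuous_onI continuous_intros)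
  have um: "u k \<in> borel_measurable P" for k unfolding u_def
    by (rule measurable_compose[OF gm, of "\<lambda>v. (v - m) $ k"]) (intro borel_measurable_continuous_onI continuous_intros)
  have ub: "AE z in P. \<bar>u k z\<bar> \<le> B + norm m" for k
    using gb by eventually_elim
      (metis u_def component_le_norm_cart norm_triangle_ineq4 add_mono order_trans order_refl)
  have gki: "integrable P (\<lambda>z. g z $ k)" for k
    using gi by (rule integrable_bounded_linear[OF bounded_linear_vec_nth])
  have gk: "(\<integral>z. g z $ k \<partial>P) = m $ k" for k
    unfolding m_def by (rule integral_bounded_linear[OF bounded_linear_vec_nth gi])
  have u0: "(\<integral>z. u k z \<partial>P) = 0" for k
    unfolding u_def using gki gk by (simp add: integral_diff PS.prob_space)
  have gk2i: "integrable P (\<lambda>z. (g z $ k)\<^sup>2)" for k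
  proof (rule PS.integrable_const_bound[where B="B\<^sup>2"])
    show "AE x in P. norm ((g x $ k)\<^sup>2) \<le> B\<^sup>2"
      using gb by eventually_elim
        (metis abs_le_square_iff abs_ge_self order_trans real_norm_def abs_power2 component_le_norm_cart abs_norm_cancel)
  qed measurable
  have uk2: "(\<integral>z. (u k z)\<^sup>2 \<partial>P) \<le> (\<integral>z. (g z $ k)\<^sup>2 \<partial>P)" for k
  proof -
    have "(\<lambda>z. (u k z)\<^sup>2) = (\<lambda>z. (g z $ k)\<^sup>2 - 2 * m $ k * g z $ k + (m $ k)\<^sup>2)"
      by (auto simp: u_def power2_eq_square algebra_simps)
    then have "(\<integral>z. (u k z)\<^sup>2 \<partial>P) = (\<integral>z. (g z $ k)\<^sup>2 \<partial>P) - 2 * m $ k * m $ k + (m $ k)\<^sup>2"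
      using gki gk2i gk by (simp add: integral_diff integral_add PS.prob_space)
    then show ?thesis by (simp add: power2_eq_square)
  qed
  have "(\<Sum>k\<in>UNIV. \<integral>z. (g z $ k)\<^sup>2 \<partial>P) = (\<integral>z. (\<Sum>k\<in>UNIV. (g z $ k)\<^sup>2) \<partial>P)"
    using gk2i by (simp add: integral_sum)
  also have "\<dots> = (\<integral>z. (norm (g z))\<^sup>2 \<partial>P)"
    unfolding power2_norm_eq_inner inner_vec_def by (simp add: power2_eq_square)
  also have "\<dots> \<le> (\<integral>z. B\<^sup>2 \<partial>P)"
  proof (rule integral_mono_AE')
    show "AE x in P. (norm (g x))\<^sup>2 \<le> B\<^sup>2" using gb by eventually_elim (simp add: power_mono)
  qed auto
  also have "\<dots> = B\<^sup>2" by (simp add: PS.prob_space)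
  finally have sumg: "(\<Sum>k\<in>UNIV. \<integral>z. (g z $ k)\<^sup>2 \<partial>P) \<le> B\<^sup>2" .
  define S where "S y = (\<Sum>j\<in>J. g (y j) - m)" for y :: "'i \<Rightarrow> 'z"
  have Sn: "(norm (S y))\<^sup>2 = (\<Sum>k\<in>UNIV. (\<Sum>j\<in>J. u k (y j))\<^sup>2)" for y
    unfolding power2_norm_eq_inner inner_vec_def by (simp add: S_def u_def power2_eq_square)
  have S2i: "integrable (PiM J (\<lambda>_. P)) (\<lambda>y. (norm (S y))\<^sup>2)"
    unfolding Sn by (intro Bochner_Integration.integrable_sum sum_sq_indep(1)[OF P J um ub u0])
  have "(\<integral>y. (norm (S y))\<^sup>2 \<partial>PiM J (\<lambda>_. P)) = (\<Sum>k\<in>UNIV. n * (\<integral>z. (u k z)\<^sup>2 \<partial>P))"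
    unfolding Sn n_def
    by (simp add: integral_sum sum_sq_indep[OF P J um ub u0])
  also have "\<dots> \<le> (\<Sum>k\<in>UNIV. n * (\<integral>z. (g z $ k)\<^sup>2 \<partial>P))"
    using n0 uk2 by (intro sum_mono mult_left_mono) auto
  also have "\<dots> \<le> n * B\<^sup>2" using sumg n0 by (simp add: sum_distrib_left[symmetric])
  finally have ES2: "(\<integral>y. (norm (S y))\<^sup>2 \<partial>PiM J (\<lambda>_. P)) \<le> n * B\<^sup>2" .
  have amgm: "(\<integral>y. norm (S y) \<partial>PiM J (\<lambda>_. P)) \<le> n * B\<^sup>2 / (2 * c) + c / 2" if c: "c > 0" for c
  proof -
    have "(\<integral>y. norm (S y) \<partial>PiM J (\<lambda>_. P)) \<le> (\<integral>y. (norm (S y))\<^sup>2 / (2 * c) + c / 2 \<partial>PiM J (\<lambda>_. P))"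
    proof (rule integral_mono')
      show "integrable (PiM J (\<lambda>_. P)) (\<lambda>y. (norm (S y))\<^sup>2 / (2 * c) + c / 2)"
        using S2i by auto
      fix y
      have "0 \<le> (norm (S y) - c)\<^sup>2" by simp
      then have "2 * c * norm (S y) \<le> (norm (S y))\<^sup>2 + c\<^sup>2"
        by (simp add: power2_eq_square algebra_simps)
      then show "norm (S y) \<le> (norm (S y))\<^sup>2 / (2 * c) + c / 2"
        using c by (simp add: field_simps power2_eq_square)
      show "0 \<le> (norm (S y))\<^sup>2 / (2 * c) + c / 2" using c by simp
    qed
    also have "\<dots> = (\<integral>y. (norm (S y))\<^sup>2 \<partial>PiM J (\<lambda>_. P)) / (2 * c) + c / 2"
      using S2i by (simp add: PJ.prob_space)
    also have "\<dots> \<le> n * B\<^sup>2 / (2 * c) + c / 2"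
      using ES2 c by (simp add: divide_right_mono)
    finally show ?thesis .
  qed
  have ES: "(\<integral>y. norm (S y) \<partial>PiM J (\<lambda>_. P)) \<le> sqrt n * B"
  proof (cases "B = 0")
    case True
    show ?thesis
    proof (rule field_le_epsilon)
      fix e :: real assume e: "e > 0"
      have "(\<integral>y. norm (S y) \<partial>PiM J (\<lambda>_. P)) \<le> n * B\<^sup>2 / (2 * (2 * e)) + 2 * e / 2"
        using amgm[of "2 * e"] e by simp
      then show "(\<integral>y. norm (S y) \<partial>PiM J (\<lambda>_. P)) \<le> sqrt n * B + e" using True by simp
    qed
  next
    case False
    then have Bp: "B > 0" using B0 by simp
    have sn: "sqrt n > 0" using n0 by simp
    have "(\<integral>y. norm (S y) \<partial>PiM J (\<lambda>_. P)) \<le> n * B\<^sup>2 / (2 * (sqrt n * B)) + sqrt n * B / 2"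
      using amgm[of "sqrt n * B"] Bp sn by simp
    also have "n * B\<^sup>2 / (2 * (sqrt n * B)) = sqrt n * B / 2"
    proof -
      have "n = sqrt n * sqrt n" using n0 by simp
      then show ?thesis using Bp sn by (simp add: field_simps power2_eq_square)
    qed
    finally show ?thesis by (simp add: mult.commute)
  qed
  have eq: "norm (m - (1 / real (card J)) *\<^sub>R (\<Sum>j\<in>J. g (y j))) = norm (S y) / n" for y
  proof -
    have "S y = (\<Sum>j\<in>J. g (y j)) - n *\<^sub>R m" by (simp add: S_def sum_subtractf n_def sum_constant_scaleR del: sum_constant)
    then have "m - (1 / real (card J)) *\<^sub>R (\<Sum>j\<in>J. g (y j)) = - ((1 / n) *\<^sub>R S y)"
      using n0 by (simp add: n_def scaleR_diff_right)
    then show ?thesis using n0 by simp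
  qed
  have "(\<integral>y. norm (m - (1 / real (card J)) *\<^sub>R (\<Sum>j\<in>J. g (y j))) \<partial>PiM J (\<lambda>_. P))
      = (\<integral>y. norm (S y) \<partial>PiM J (\<lambda>_. P)) / n"
    unfolding eq by simp
  also have "\<dots> \<le> sqrt n * B / n" using ES n0 by (simp add: divide_right_mono)
  also have "\<dots> = B / sqrt n"
    using n0 by (simp add: field_simps)
  finally show ?thesis unfolding m_def n_def .
qed



lemma descent:
  fixes F :: "real^'d \<Rightarrow> real" and gF :: "real^'d \<Rightarrow> real^'d"
  assumes conv: "convex \<Omega>" and Fd: "\<forall>x. (F has_derivative (\<lambda>h. inner (gF x) h)) (at x)"
    and Lip: "\<forall>x\<in>\<Omega>. \<forall>y\<in>\<Omega>. norm (gF x - gF y) \<le> L * norm (x - y)"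
    and x: "x \<in> \<Omega>" and y: "y \<in> \<Omega>"
  shows "F y \<le> F x + inner (gF x) (y - x) + L / 2 * (norm (y - x))\<^sup>2"
proof -
  define v where "v = y - x"
  define \<phi> where "\<phi> s = F (x + s *\<^sub>R v) - s * inner (gF x) v - L / 2 * s\<^sup>2 * (norm v)\<^sup>2" for s
  have d1: "((\<lambda>s. F (x + s *\<^sub>R v)) has_real_derivative inner (gF (x + s *\<^sub>R v)) v) (at s)" for s
  proof -
    have a: "((\<lambda>s. x + s *\<^sub>R v) has_derivative (\<lambda>h. h *\<^sub>R v)) (at s)"
      by (auto intro!: derivative_eq_intros)
    have "((\<lambda>s. F (x + s *\<^sub>R v)) has_derivative (\<lambda>h. inner (gF (x + s *\<^sub>R v)) (h *\<^sub>R v))) (at s)"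
      using has_derivative_compose[OF a] Fd by blast
    moreover have "(\<lambda>h. inner (gF (x + s *\<^sub>R v)) (h *\<^sub>R v)) = (*) (inner (gF (x + s *\<^sub>R v)) v)"
      by (rule ext) simp
    ultimately show ?thesis unfolding has_field_derivative_def by simp
  qed
  have d: "(\<phi> has_real_derivative (inner (gF (x + s *\<^sub>R v)) v - inner (gF x) v - L * s * (norm v)\<^sup>2)) (at s)" for s
    unfolding \<phi>_def by (rule derivative_eq_intros d1 refl | simp)+
  have "\<phi> 1 \<le> \<phi> 0"
  proof (rule DERIV_nonpos_imp_nonincreasing[of 0 1])
    fix s :: real assume s: "0 \<le> s" "s \<le> 1"
    have p: "x + s *\<^sub>R v \<in> \<Omega>"
    proof -
      have "x + s *\<^sub>R v = (1 - s) *\<^sub>R x + s *\<^sub>R y" by (simp add: v_def algebra_simps)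
      then show ?thesis using convexD_alt[OF conv x y] s by simp
    qed
    have "inner (gF (x + s *\<^sub>R v)) v - inner (gF x) v = inner (gF (x + s *\<^sub>R v) - gF x) v"
      by (simp add: inner_diff_left)
    also have "\<dots> \<le> norm (gF (x + s *\<^sub>R v) - gF x) * norm v" by (rule norm_cauchy_schwarz)
    also have "\<dots> \<le> L * norm (x + s *\<^sub>R v - x) * norm v"
      using Lip p x by (intro mult_right_mono) (blast, simp)
    also have "\<dots> = L * s * (norm v)\<^sup>2" using s by (simp add: power2_eq_square)
    finally show "\<exists>y. (\<phi> has_real_derivative y) (at s) \<and> y \<le> 0"
      using d by (intro exI conjI) auto
  qed simp
  then show ?thesis by (simp add: \<phi>_def v_def)
qed

lemma iter_in:
  assumes "x0 \<in> \<Omega>" "convex \<Omega>" "\<forall>t c. lmo t c \<in> \<Omega>" "\<forall>t. 0 \<le> \<gamma> t \<and> \<gamma> t \<le> 1"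
  shows "sfw_iter lmo gf x0 \<gamma> b \<omega> t \<in> \<Omega>"
proof (induction t)
  case 0 then show ?case using assms by simp
next
  case (Suc t)
  define x where "x = sfw_iter lmo gf x0 \<gamma> b \<omega> t"
  define v where "v = lmo t (- ((1 / real (b t)) *\<^sub>R (\<Sum>i<b t. gf x (\<omega> (t, i)))))"
  have v: "v \<in> \<Omega>" using assms(3) by (simp add: v_def)
  have "x + \<gamma> t *\<^sub>R (v - x) = (1 - \<gamma> t) *\<^sub>R x + \<gamma> t *\<^sub>R v" by (simp add: algebra_simps)
  moreover have "\<dots> \<in> \<Omega>" using convexD_alt[OF assms(2)] Suc.IH v assms(4) by (simp add: x_def)
  ultimately show ?case by (simp add: Let_def x_def[symmetric] v_def[symmetric])
qed

lemma iter_cong: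
  assumes "\<forall>s<t. \<forall>i<b s. \<omega> (s, i) = \<omega>' (s, i)"
  shows "sfw_iter lmo gf x0 \<gamma> b \<omega> t = sfw_iter lmo gf x0 \<gamma> b \<omega>' t"
  using assms
proof (induction t)
  case 0 then show ?case by simp
next
  case (Suc t)
  then have IH: "sfw_iter lmo gf x0 \<gamma> b \<omega> t = sfw_iter lmo gf x0 \<gamma> b \<omega>' t" by simp
  have "(\<Sum>i<b t. gf x (\<omega> (t, i))) = (\<Sum>i<b t. gf x (\<omega>' (t, i)))" for x
    using Suc.prems by (intro sum.cong) auto
  then show ?case by (simp add: Let_def IH)
qed

lemma iter_zero: "sfw_iter lmo gf x0 (\<lambda>_. 0) b \<omega> t = x0"
  by (induction t) (simp_all add: Let_def)

lemma gap_le: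
  assumes "\<Omega> \<noteq> {}" "\<forall>v\<in>\<Omega>. inner (v - x) (- gF x) \<le> c"
  shows "fw_gap \<Omega> gF x \<le> c"
  unfolding fw_gap_def using assms by (intro cSUP_least) auto

lemma gap_nonneg:
  fixes gF :: "real^'d \<Rightarrow> real^'d"
  assumes "x \<in> \<Omega>" "\<forall>x\<in>\<Omega>. \<forall>y\<in>\<Omega>. norm (x - y) \<le> D"
  shows "0 \<le> fw_gap \<Omega> gF x"
proof -
  have "bdd_above ((\<lambda>v. inner (v - x) (- gF x)) ` \<Omega>)"
  proof (rule bdd_aboveI2)
    fix v assume "v \<in> \<Omega>"
    have "inner (v - x) (- gF x) \<le> norm (v - x) * norm (- gF x)" by (rule norm_cauchy_schwarz)
    also have "\<dots> \<le> D * norm (gF x)"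
    proof -
      have "norm (v - x) \<le> D" using assms \<open>v \<in> \<Omega>\<close> by blast
      then show ?thesis by (simp add: mult_right_mono)
    qed
    finally show "inner (v - x) (- gF x) \<le> D * norm (gF x)" .
  qed
  then have "inner (x - x) (- gF x) \<le> fw_gap \<Omega> gF x"
    unfolding fw_gap_def using assms(1) by (rule cSUP_upper2) simp
  then show ?thesis by simp
qed

lemma gap_at_min:
  fixes F :: "real^'d \<Rightarrow> real" and gF :: "real^'d \<Rightarrow> real^'d"
  assumes conv: "convex \<Omega>" and Fd: "\<forall>x. (F has_derivative (\<lambda>h. inner (gF x) h)) (at x)"
    and Lip: "\<forall>x\<in>\<Omega>. \<forall>y\<in>\<Omega>. norm (gF x - gF y) \<le> L * norm (x - y)" and L: "L > 0"
    and x: "x \<in> \<Omega>" and xmin: "\<forall>y\<in>\<Omega>. F x \<le> F y"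
  shows "fw_gap \<Omega> gF x \<le> 0"
proof (rule gap_le)
  show "\<Omega> \<noteq> {}" using x by auto
  show "\<forall>v\<in>\<Omega>. inner (v - x) (- gF x) \<le> 0"
  proof (intro ballI)
    fix v assume v: "v \<in> \<Omega>"
    define c where "c = inner (v - x) (- gF x)"
    define K where "K = (norm (v - x))\<^sup>2"
    have key: "s * c \<le> L / 2 * s\<^sup>2 * K" if s: "0 \<le> s" "s \<le> 1" for s
    proof -
      have y: "x + s *\<^sub>R (v - x) \<in> \<Omega>"
      proof -
        have "x + s *\<^sub>R (v - x) = (1 - s) *\<^sub>R x + s *\<^sub>R v" by (simp add: algebra_simps)
        then show ?thesis using convexD_alt[OF conv x v] s by simp
      qed
      have "F x \<le> F (x + s *\<^sub>R (v - x))" using xmin y by blast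
      also have "\<dots> \<le> F x + inner (gF x) (s *\<^sub>R (v - x)) + L / 2 * (norm (s *\<^sub>R (v - x)))\<^sup>2"
        using descent[OF conv Fd Lip x y] by simp
      moreover have "L / 2 * (norm (s *\<^sub>R (v - x)))\<^sup>2 = L / 2 * s\<^sup>2 * K" using s by (simp add: K_def power_mult_distrib)
      moreover have "inner (gF x) (s *\<^sub>R (v - x)) = - (s * c)" by (simp add: c_def inner_commute)
      ultimately show ?thesis by linarith
    qed
    show "c \<le> 0"
    proof (rule ccontr)
      assume "\<not> c \<le> 0"
      then have cp: "c > 0" by simp
      show False
      proof (cases "K = 0")
        case True then show False using key[of 1] cp by simp
      next
        case False
        then have Kp: "K > 0" by (simp add: K_def)
        define s where "s = min 1 (c / (L * K))"
        have s0: "0 < s" using cp Kp L by (simp add: s_def)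
        have s1: "s \<le> 1" by (simp add: s_def)
        have "s * (L * K) \<le> c" using Kp L by (simp add: s_def min_def field_simps split: if_splits)
        then have "L / 2 * s\<^sup>2 * K \<le> s * c / 2" using s0 by (simp add: power2_eq_square field_simps)
        moreover have "s * c / 2 < s * c" using s0 cp by simp
        ultimately show False using key[OF less_imp_le[OF s0] s1] by linarith
      qed
    qed
  qed
qed

lemma step_ineq:
  fixes F :: "real^'d \<Rightarrow> real" and gF :: "real^'d \<Rightarrow> real^'d"
  assumes conv: "convex \<Omega>" and Fd: "\<forall>x. (F has_derivative (\<lambda>h. inner (gF x) h)) (at x)"
    and Lip: "\<forall>x\<in>\<Omega>. \<forall>y\<in>\<Omega>. norm (gF x - gF y) \<le> L * norm (x - y)" and L: "L > 0"
    and diam: "\<forall>x\<in>\<Omega>. \<forall>y\<in>\<Omega>. norm (x - y) \<le> D"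
    and x: "x \<in> \<Omega>" and v': "v' \<in> \<Omega>" and vmax: "\<forall>v\<in>\<Omega>. inner v (- g) \<le> inner v' (- g)"
    and \<gamma>: "0 < \<gamma>" "\<gamma> \<le> 1"
  shows "fw_gap \<Omega> gF x \<le> (F x - F (x + \<gamma> *\<^sub>R (v' - x))) / \<gamma> + L * \<gamma> * D\<^sup>2 / 2 + D * norm (gF x - g)"
proof (rule gap_le)
  show "\<Omega> \<noteq> {}" using x by auto
  define x' where "x' = x + \<gamma> *\<^sub>R (v' - x)"
  have x': "x' \<in> \<Omega>"
  proof -
    have "x' = (1 - \<gamma>) *\<^sub>R x + \<gamma> *\<^sub>R v'" by (simp add: x'_def algebra_simps)
    then show ?thesis using convexD_alt[OF conv x v'] \<gamma> by simp
  qed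
  have nv: "norm (v' - x) \<le> D" using diam x v' by blast
  have "F x' \<le> F x + inner (gF x) (x' - x) + L / 2 * (norm (x' - x))\<^sup>2"
    by (rule descent[OF conv Fd Lip x x'])
  also have "inner (gF x) (x' - x) = \<gamma> * inner (gF x) (v' - x)" by (simp add: x'_def)
  also have "(norm (x' - x))\<^sup>2 = \<gamma>\<^sup>2 * (norm (v' - x))\<^sup>2"
    using \<gamma> by (simp add: x'_def power_mult_distrib)
  also have "L / 2 * (\<gamma>\<^sup>2 * (norm (v' - x))\<^sup>2) \<le> L / 2 * (\<gamma>\<^sup>2 * D\<^sup>2)"
    using L nv by (intro mult_left_mono power_mono) auto
  finally have desc: "F x' \<le> F x + \<gamma> * inner (gF x) (v' - x) + L / 2 * (\<gamma>\<^sup>2 * D\<^sup>2)" by simp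
  then have A: "- inner (gF x) (v' - x) \<le> (F x - F x') / \<gamma> + L * \<gamma> * D\<^sup>2 / 2"
    using \<gamma> by (simp add: field_simps power2_eq_square)
  show "\<forall>v\<in>\<Omega>. inner (v - x) (- gF x) \<le> (F x - F x') / \<gamma> + L * \<gamma> * D\<^sup>2 / 2 + D * norm (gF x - g)"
  proof
    fix v assume v: "v \<in> \<Omega>"
    have "inner g (v' - v) \<le> 0" using vmax v by (simp add: inner_diff_right inner_commute[of g])
    moreover have "inner (gF x - g) (v' - v) \<le> norm (gF x - g) * D"
    proof -
      have "inner (gF x - g) (v' - v) \<le> norm (gF x - g) * norm (v' - v)" by (rule norm_cauchy_schwarz)
      also have "\<dots> \<le> norm (gF x - g) * D" using diam v v' by (intro mult_left_mono) auto
      finally show ?thesis .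
    qed
    moreover have "inner (v - x) (- gF x) = - inner (gF x) (v' - x) + inner g (v' - v) + inner (gF x - g) (v' - v)"
      by (simp add: inner_diff_left inner_diff_right inner_commute)
    ultimately show "inner (v - x) (- gF x) \<le> (F x - F x') / \<gamma> + L * \<gamma> * D\<^sup>2 / 2 + D * norm (gF x - g)"
      using A by (simp add: mult.commute)
  qed
qed


theorem theorem2:
  fixes \<Omega> :: "(real^'d) set" and D L Gb \<beta> :: real
    and P :: "(real^'p) measure" and \<Xi> :: "(real^'p) set"
    and f :: "real^'d \<Rightarrow> real^'p \<Rightarrow> real" and gf :: "real^'d \<Rightarrow> real^'p \<Rightarrow> real^'d"
    and F :: "real^'d \<Rightarrow> real" and gF :: "real^'d \<Rightarrow> real^'d"
    and xs x0 :: "real^'d" and T :: nat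
    and lmo :: "nat \<Rightarrow> real^'d \<Rightarrow> real^'d"
  assumes \<Omega>_ne: "\<Omega> \<noteq> {}" and \<Omega>_convex: "convex \<Omega>" and \<Omega>_compact: "compact \<Omega>"
    and diam: "\<forall>x\<in>\<Omega>. \<forall>y\<in>\<Omega>. norm (x - y) \<le> D"
    and P_prob: "prob_space P" and P_sets: "sets P = sets borel"
    and P_supp: "AE z in P. z \<in> \<Xi>"
    and f_deriv: "\<forall>z\<in>\<Xi>. \<forall>x. ((\<lambda>y. f y z) has_derivative (\<lambda>h. inner (gf x z) h)) (at x)"
    and gf_bound: "\<forall>x\<in>\<Omega>. \<forall>z\<in>\<Xi>. norm (gf x z) \<le> Gb"
    and gf_meas: "(\<lambda>(x, z). gf x z) \<in> borel_measurable (borel \<Otimes>\<^sub>M P)"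
    and f_int: "\<forall>x. integrable P (\<lambda>z. f x z)"
    and F_def: "\<forall>x. F x = (\<integral>z. f x z \<partial>P)"
    and gF_def: "\<forall>x. gF x = (\<integral>z. gf x z \<partial>P)"
    and F_deriv: "\<forall>x. (F has_derivative (\<lambda>h. inner (gF x) h)) (at x)"
    and L_pos: "L > 0"
    and L_smooth: "\<forall>x\<in>\<Omega>. \<forall>y\<in>\<Omega>. norm (gF x - gF y) \<le> L * norm (x - y)"
    and xs_in: "xs \<in> \<Omega>" and xs_min: "\<forall>x\<in>\<Omega>. F xs \<le> F x"
    and x0_in: "x0 \<in> \<Omega>" and T_pos: "T \<ge> 1"
    and \<beta>_ge: "\<beta> \<ge> 2 * (F x0 - F xs) / (L * D\<^sup>2)" and \<beta>_pos: "\<beta> > 0"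
    and lmo_in: "\<forall>t c. lmo t c \<in> \<Omega>"
    and lmo_max: "\<forall>t c. \<forall>v\<in>\<Omega>. inner v c \<le> inner (lmo t c) c"
    and lmo_meas: "\<forall>t. lmo t \<in> borel_measurable borel"
  shows "(1 / real T) *
           (\<Sum>t<T. \<integral>\<omega>. fw_gap \<Omega> gF
               (sfw_iter lmo gf x0
                  (\<lambda>_. sqrt (2 * (F x0 - F xs) / (real T * L * D\<^sup>2 * \<beta>)))
                  (\<lambda>_. T) \<omega> t)
             \<partial>(sfw_samples T (\<lambda>_. T) P))
         \<le> D / sqrt (real T) * (Gb + sqrt (2 * L * (F x0 - F xs) / \<beta>) * (1 + \<beta>))"
  proof -
  interpret PS: prob_space P by (rule P_prob)
  define \<Delta> where "\<Delta> = F x0 - F xs"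
  have \<Delta>0: "\<Delta> \<ge> 0" using xs_min x0_in by (simp add: \<Delta>_def)
  define \<gamma> where "\<gamma> = sqrt (2 * (F x0 - F xs) / (real T * L * D\<^sup>2 * \<beta>))"
  define I where "I = (SIGMA t:{..<T}. {..<T})"
  define M where "M = sfw_samples T (\<lambda>_. T) P"
  have M_eq: "M = PiM I (\<lambda>_. P)" by (simp add: M_def sfw_samples_def I_def)
  interpret PM: prob_space M unfolding M_eq by (rule prob_space_PiM) (rule P_prob)
  define X where "X \<omega> t = sfw_iter lmo gf x0 (\<lambda>_. \<gamma>) (\<lambda>_. T) \<omega> t" for \<omega> t
  have D0: "D \<ge> 0" using diam x0_in by force
  obtain z0 where z0: "z0 \<in> \<Xi>"
  proof -
    have "\<Xi> \<noteq> {}"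
    proof
      assume "\<Xi> = {}"
      then have "AE z in P. False" using P_supp by simp
      then show False by (simp add: PS.AE_False)
    qed
    then show ?thesis using that by blast
  qed
  have Gb0: "Gb \<ge> 0" using gf_bound x0_in z0 by (meson norm_ge_zero order_trans)
  have RHS0: "0 \<le> D / sqrt (real T) * (Gb + sqrt (2 * L * (F x0 - F xs) / \<beta>) * (1 + \<beta>))"
    using D0 Gb0 \<Delta>0 L_pos \<beta>_pos by (simp add: \<Delta>_def)
  have "(1 / real T) * (\<Sum>t<T. \<integral>\<omega>. fw_gap \<Omega> gF (X \<omega> t) \<partial>M)
     \<le> D / sqrt (real T) * (Gb + sqrt (2 * L * (F x0 - F xs) / \<beta>) * (1 + \<beta>))"
  proof (cases "\<Delta> = 0")
    case True
    then have g0: "\<gamma> = 0" by (simp add: \<gamma>_def \<Delta>_def)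
    have "fw_gap \<Omega> gF x0 \<le> 0"
      by (rule gap_at_min[OF \<Omega>_convex F_deriv L_smooth L_pos x0_in]) (use True xs_min in \<open>simp add: \<Delta>_def\<close>)
    then have "(\<Sum>t<T. \<integral>\<omega>. fw_gap \<Omega> gF (X \<omega> t) \<partial>M) \<le> 0"
      by (simp add: X_def g0 iter_zero PM.prob_space mult_nonneg_nonpos)
    then have "(1 / real T) * (\<Sum>t<T. \<integral>\<omega>. fw_gap \<Omega> gF (X \<omega> t) \<partial>M) \<le> 0"
      by (intro mult_nonneg_nonpos) simp_all
    then show ?thesis using RHS0 by linarith
  next
    case False
    then have \<Delta>p: "\<Delta> > 0" using \<Delta>0 by simp
    have Dp: "D > 0"
    proof (rule ccontr)
      assume "\<not> D > 0"
      then have "norm (x0 - xs) \<le> 0" using diam x0_in xs_in D0 by force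
      then show False using \<Delta>p by (simp add: \<Delta>_def)
    qed
    have Tp: "real T > 0" using T_pos by simp
    have \<gamma>2: "\<gamma>\<^sup>2 = 2 * \<Delta> / (real T * L * D\<^sup>2 * \<beta>)"
      unfolding \<gamma>_def \<Delta>_def[symmetric] using \<Delta>p Dp L_pos \<beta>_pos Tp by simp
    have \<gamma>p: "\<gamma> > 0" unfolding \<gamma>_def \<Delta>_def[symmetric] using \<Delta>p Dp L_pos \<beta>_pos Tp by simp
    have \<gamma>1: "\<gamma> \<le> 1"
    proof -
      have "2 * \<Delta> / (L * D\<^sup>2) \<le> \<beta>" using \<beta>_ge by (simp add: \<Delta>_def)
      then have "2 * \<Delta> \<le> \<beta> * (L * D\<^sup>2)" using L_pos Dp by (simp add: pos_divide_le_eq)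
      also have "\<dots> \<le> real T * L * D\<^sup>2 * \<beta>" using T_pos L_pos Dp \<beta>_pos by simp
      finally have "\<gamma>\<^sup>2 \<le> 1" unfolding \<gamma>2 using L_pos Dp \<beta>_pos Tp by simp
      then show ?thesis using \<gamma>p by (simp add: power_le_one_iff abs_le_square_iff[of _ 1, symmetric])
    qed
    have Xin: "X \<omega> t \<in> \<Omega>" for \<omega> t
      unfolding X_def by (rule iter_in[OF x0_in \<Omega>_convex lmo_in]) (use \<gamma>p \<gamma>1 in auto)
    define gh where "gh \<omega> t = (1 / real T) *\<^sub>R (\<Sum>i<T. gf (X \<omega> t) (\<omega> (t, i)))" for \<omega> t
    have Xsuc: "X \<omega> (Suc t) = X \<omega> t + \<gamma> *\<^sub>R (lmo t (- gh \<omega> t) - X \<omega> t)" for \<omega> t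
      by (simp add: X_def gh_def Let_def)
    define e where "e \<omega> t = norm (gF (X \<omega> t) - gh \<omega> t)" for \<omega> t
    have gapb: "fw_gap \<Omega> gF (X \<omega> t) \<le> (F (X \<omega> t) - F (X \<omega> (Suc t))) / \<gamma> + L * \<gamma> * D\<^sup>2 / 2 + D * e \<omega> t" for \<omega> t
      unfolding Xsuc e_def
      by (rule step_ineq[OF \<Omega>_convex F_deriv L_smooth L_pos diam Xin lmo_in[rule_format] _ \<gamma>p \<gamma>1])
         (use lmo_max in blast)
    have gap0: "0 \<le> fw_gap \<Omega> gF (X \<omega> t)" for \<omega> t by (rule gap_nonneg[OF Xin diam])
    have gfm: "(\<lambda>\<omega>. gf (A \<omega>) (B \<omega>)) \<in> borel_measurable N"
      if "A \<in> borel_measurable N" "B \<in> measurable N P" for N :: "'w measure" and A B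
      using measurable_compose[OF measurable_Pair[OF that] gf_meas] by simp
    have compm: "(\<lambda>\<omega>. \<omega> j) \<in> measurable M P" if "j \<in> I" for j
      unfolding M_eq using that by (rule measurable_component_singleton)
    have ghm0: "(\<lambda>\<omega>. gh \<omega> t) \<in> borel_measurable M"
      if "t < T" "(\<lambda>\<omega>. X \<omega> t) \<in> borel_measurable M" for t
      unfolding gh_def
      by (intro borel_measurable_scaleR borel_measurable_const borel_measurable_sum gfm that(2) compm)
         (auto simp: I_def that(1))
    have Xm: "t \<le> T \<Longrightarrow> (\<lambda>\<omega>. X \<omega> t) \<in> borel_measurable M" for t
    proof (induction t)
      case 0 then show ?case by (simp add: X_def)
    next
      case (Suc t)
      then have tT: "t < T" and IH: "(\<lambda>\<omega>. X \<omega> t) \<in> borel_measurable M" by auto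
      have "(\<lambda>\<omega>. lmo t (- gh \<omega> t)) \<in> borel_measurable M"
        by (rule measurable_compose[OF borel_measurable_uminus[OF ghm0[OF tT IH]] lmo_meas[rule_format]])
      then show ?case unfolding Xsuc
        by (intro borel_measurable_add borel_measurable_scaleR borel_measurable_const borel_measurable_diff IH)
    qed
    have ghm: "t < T \<Longrightarrow> (\<lambda>\<omega>. gh \<omega> t) \<in> borel_measurable M" for t
      using ghm0 Xm by simp
    have Fc: "continuous_on UNIV F"
      by (intro continuous_at_imp_continuous_on ballI has_derivative_continuous[OF F_deriv[rule_format]])
    have Fm: "F \<in> borel_measurable borel" by (rule borel_measurable_continuous_onI[OF Fc])
    obtain BF where BF: "\<forall>x\<in>\<Omega>. \<bar>F x\<bar> \<le> BF"
    proof -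
      have "compact (F ` \<Omega>)" by (rule compact_continuous_image[OF continuous_on_subset[OF Fc] \<Omega>_compact]) simp
      then have "bounded (F ` \<Omega>)" by (rule compact_imp_bounded)
      then obtain a where "\<forall>y\<in>F ` \<Omega>. \<bar>y\<bar> \<le> a" unfolding bounded_real by auto
      then show ?thesis using that by auto
    qed
    have FXi: "t \<le> T \<Longrightarrow> integrable M (\<lambda>\<omega>. F (X \<omega> t))" for t
      by (rule PM.integrable_const_bound[where B=BF]) (use BF Xin Xm Fm in auto)
    have gFm: "gF \<in> borel_measurable borel"
    proof -
      have "(\<lambda>x. \<integral>z. gf x z \<partial>P) \<in> borel_measurable borel"
        using PS.borel_measurable_lebesgue_integral[of "\<lambda>x z. gf x z" borel] gf_meas by simp
      moreover have "gF = (\<lambda>x. \<integral>z. gf x z \<partial>P)" using gF_def by auto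
      ultimately show ?thesis by simp
    qed
    have em: "t < T \<Longrightarrow> (\<lambda>\<omega>. e \<omega> t) \<in> borel_measurable M" for t
      unfolding e_def using Xm[of t] ghm[of t] gFm by measurable
    have gfAE: "AE z in P. norm (gf x z) \<le> Gb" if "x \<in> \<Omega>" for x
      using P_supp by eventually_elim (use gf_bound that in auto)
    have gFb: "norm (gF x) \<le> Gb" if "x \<in> \<Omega>" for x
    proof -
      have "norm (gF x) \<le> (\<integral>z. norm (gf x z) \<partial>P)" unfolding gF_def[rule_format] by (rule integral_norm_bound)
      also have "\<dots> \<le> (\<integral>z. Gb \<partial>P)" by (rule integral_mono_AE') (use gfAE[OF that] Gb0 in auto)
      also have "\<dots> = Gb" by (simp add: PS.prob_space)
      finally show ?thesis .
    qed
    have AEX: "AE \<omega> in M. \<forall>j\<in>I. \<omega> j \<in> \<Xi>"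
      unfolding M_eq
      by (rule AE_finite_allI) (auto simp: I_def intro!: AE_PiM_component P_prob P_supp)
    have eb: "AE \<omega> in M. \<forall>t<T. e \<omega> t \<le> 2 * Gb"
      using AEX
    proof eventually_elim
      case (elim \<omega>)
      show ?case
      proof (intro allI impI)
        fix t assume t: "t < T"
        have "norm (\<Sum>i<T. gf (X \<omega> t) (\<omega> (t, i))) \<le> (\<Sum>i<T. norm (gf (X \<omega> t) (\<omega> (t, i))))"
          by (rule norm_sum)
        also have "\<dots> \<le> real (card {..<T}) * Gb"
          by (rule sum_bounded_above) (use elim gf_bound Xin t in \<open>auto simp: I_def\<close>)
        finally have "norm (gh \<omega> t) \<le> Gb" using Tp by (simp add: gh_def field_simps)
        moreover have "norm (gF (X \<omega> t)) \<le> Gb" by (rule gFb[OF Xin])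
        ultimately show "e \<omega> t \<le> 2 * Gb" unfolding e_def
          by (smt (verit) norm_triangle_ineq4)
      qed
    qed
    have ei: "t < T \<Longrightarrow> integrable M (\<lambda>\<omega>. e \<omega> t)" for t
      by (rule PM.integrable_const_bound[where B="2 * Gb"]) (use eb em in \<open>auto simp: e_def\<close>)
    interpret PSF: product_sigma_finite "\<lambda>_::nat\<times>nat. P"
      unfolding product_sigma_finite_def using PS.sigma_finite_measure_axioms by simp
    have Ee: "(\<integral>\<omega>. e \<omega> t \<partial>M) \<le> Gb / sqrt (real T)" if t: "t < T" for t
    proof -
      define J where "J = {t} \<times> {..<T}"
      define K where "K = I - J"
      have IKJ: "I = K \<union> J" using t by (auto simp: I_def J_def K_def)
      have KJ: "K \<inter> J = {}" by (auto simp: K_def)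
      have fK: "finite K" and fJ: "finite J" by (auto simp: K_def I_def J_def)
      interpret PK: prob_space "PiM K (\<lambda>_. P)" by (rule prob_space_PiM) (rule P_prob)
      have "(\<integral>\<omega>. e \<omega> t \<partial>M) = (\<integral>x. (\<integral>y. e (merge K J (x, y)) t \<partial>PiM J (\<lambda>_. P)) \<partial>PiM K (\<lambda>_. P))"
        using PSF.product_integral_fold[OF KJ fK fJ, of "\<lambda>\<omega>. e \<omega> t"] ei[OF t] unfolding M_eq IKJ by simp
      also have "\<dots> \<le> (\<integral>x. Gb / sqrt (real T) \<partial>PiM K (\<lambda>_. P))"
      proof (rule integral_mono')
        show "integrable (PiM K (\<lambda>_. P)) (\<lambda>x. Gb / sqrt (real T))" by simp
        show "0 \<le> Gb / sqrt (real T)" using Gb0 by simp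
        fix x
        define c where "c = X (merge K J (x, \<lambda>_. undefined)) t"
        have c_eq: "X (merge K J (x, y)) t = c" for y
          unfolding c_def X_def by (rule iter_cong) (auto simp: merge_def K_def J_def I_def)
        have my: "merge K J (x, y) (t, i) = y (t, i)" if "i < T" for y i
          using that by (auto simp: merge_def K_def J_def)
        have Jimg: "J = (\<lambda>i. (t, i)) ` {..<T}" by (auto simp: J_def)
        have reidx: "(\<Sum>i<T. gf c (y (t, i))) = (\<Sum>j\<in>J. gf c (y j))" for y
          unfolding Jimg by (subst sum.reindex) (auto simp: inj_on_def)
        have cardJ: "card J = T" by (simp add: J_def card_cartesian_product)
        have ee: "e (merge K J (x, y)) t = norm ((\<integral>z. gf c z \<partial>P) - (1 / real (card J)) *\<^sub>R (\<Sum>j\<in>J. gf c (y j)))" for y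
        proof -
          have "(\<Sum>i<T. gf c (merge K J (x, y) (t, i))) = (\<Sum>i<T. gf c (y (t,i)))"
            by (rule sum.cong) (simp_all add: my)
          then show ?thesis by (simp add: e_def gh_def c_eq reidx cardJ gF_def)
        qed
        have cin: "c \<in> \<Omega>" unfolding c_def by (rule Xin)
        have gcm: "gf c \<in> borel_measurable P"
          using gfm[of "\<lambda>_. c" P "\<lambda>z. z"] by (simp add: measurable_ident_sets)
        have "(\<integral>y. e (merge K J (x, y)) t \<partial>PiM J (\<lambda>_. P)) \<le> Gb / sqrt (real (card J))"
          unfolding ee
          by (rule vec_mean_dev[OF P_prob fJ _ gcm gfAE[OF cin]]) (use t in \<open>auto simp: J_def\<close>)
        then show "(\<integral>y. e (merge K J (x, y)) t \<partial>PiM J (\<lambda>_. P)) \<le> Gb / sqrt (real T)"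
          using cardJ by simp
      qed
      also have "\<dots> = Gb / sqrt (real T)" by (simp add: PK.prob_space)
      finally show ?thesis .
    qed
    define EF where "EF t = (\<integral>\<omega>. F (X \<omega> t) \<partial>M)" for t
    have stepE: "(\<integral>\<omega>. fw_gap \<Omega> gF (X \<omega> t) \<partial>M) \<le> (EF t - EF (Suc t)) / \<gamma> + L * \<gamma> * D\<^sup>2 / 2 + D * (Gb / sqrt (real T))"
      if t: "t < T" for t
    proof -
      have hi: "integrable M (\<lambda>\<omega>. (F (X \<omega> t) - F (X \<omega> (Suc t))) / \<gamma> + L * \<gamma> * D\<^sup>2 / 2 + D * e \<omega> t)"
        using FXi[of t] FXi[of "Suc t"] ei[OF t] t by auto
      have "(\<integral>\<omega>. fw_gap \<Omega> gF (X \<omega> t) \<partial>M) \<le> (\<integral>\<omega>. (F (X \<omega> t) - F (X \<omega> (Suc t))) / \<gamma> + L * \<gamma> * D\<^sup>2 / 2 + D * e \<omega> t \<partial>M)"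
        by (rule integral_mono'[OF hi]) (use gapb gap0 order_trans in blast)+
      also have "\<dots> = (EF t - EF (Suc t)) / \<gamma> + L * \<gamma> * D\<^sup>2 / 2 + D * (\<integral>\<omega>. e \<omega> t \<partial>M)"
        using FXi[of t] FXi[of "Suc t"] ei[OF t] t
        by (simp add: EF_def integral_add integral_diff PM.prob_space)
      also have "\<dots> \<le> (EF t - EF (Suc t)) / \<gamma> + L * \<gamma> * D\<^sup>2 / 2 + D * (Gb / sqrt (real T))"
        using mult_left_mono[OF Ee[OF t] D0] by simp
      finally show ?thesis .
    qed
    have EF0: "EF 0 = F x0" by (simp add: EF_def X_def PM.prob_space)
    have EFT: "F xs \<le> EF T"
    proof -
      have "(\<integral>\<omega>. F xs \<partial>M) \<le> EF T" unfolding EF_def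
        by (rule integral_mono) (use FXi xs_min Xin in auto)
      then show ?thesis by (simp add: PM.prob_space)
    qed
    have "(\<Sum>t<T. \<integral>\<omega>. fw_gap \<Omega> gF (X \<omega> t) \<partial>M) \<le> (\<Sum>t<T. (EF t - EF (Suc t)) / \<gamma> + (L * \<gamma> * D\<^sup>2 / 2 + D * (Gb / sqrt (real T))))"
      using stepE by (intro sum_mono) (simp add: add.assoc)
    also have "\<dots> = (EF 0 - EF T) / \<gamma> + real T * (L * \<gamma> * D\<^sup>2 / 2 + D * (Gb / sqrt (real T)))"
      by (simp add: sum.distrib sum_divide_distrib[symmetric] sum_lessThan_telescope')
    also have "\<dots> \<le> \<Delta> / \<gamma> + real T * (L * \<gamma> * D\<^sup>2 / 2 + D * (Gb / sqrt (real T)))"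
      using EF0 EFT \<gamma>p by (simp add: \<Delta>_def divide_right_mono)
    finally have S: "(\<Sum>t<T. \<integral>\<omega>. fw_gap \<Omega> gF (X \<omega> t) \<partial>M) \<le> \<Delta> / \<gamma> + real T * (L * \<gamma> * D\<^sup>2 / 2 + D * (Gb / sqrt (real T)))" .
    define sT where "sT = sqrt (real T)"
    define a where "a = sqrt (L * \<Delta> / (2 * \<beta>))"
    have sTp: "sT > 0" using Tp by (simp add: sT_def)
    have sT2: "sT\<^sup>2 = real T" using Tp by (simp add: sT_def)
    have ap: "a > 0" using L_pos \<Delta>p \<beta>_pos by (simp add: a_def)
    have a2: "a\<^sup>2 = L * \<Delta> / (2 * \<beta>)" using L_pos \<Delta>p \<beta>_pos by (simp add: a_def)
    have \<Delta>eq: "\<Delta> = 2 * \<beta> * a\<^sup>2 / L" using a2 L_pos \<beta>_pos by (simp add: field_simps)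
    have sq2: "sqrt (2 * L * (F x0 - F xs) / \<beta>) = 2 * a"
    proof (rule real_sqrt_unique)
      show "(2 * a)\<^sup>2 = 2 * L * (F x0 - F xs) / \<beta>"
        using a2 \<beta>_pos by (simp add: power_mult_distrib \<Delta>_def[symmetric] field_simps)
    qed (use ap in simp)
    have \<gamma>eq: "\<gamma> = 2 * a / (sT * L * D)"
      unfolding \<gamma>_def
    proof (rule real_sqrt_unique)
      show "(2 * a / (sT * L * D))\<^sup>2 = 2 * (F x0 - F xs) / (real T * L * D\<^sup>2 * \<beta>)"
        unfolding \<Delta>_def[symmetric] \<Delta>eq sT2[symmetric]
        using L_pos Dp sTp \<beta>_pos ap by (simp add: power_mult_distrib power_divide field_simps power2_eq_square)
    qed (use ap sTp L_pos Dp in simp)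
    have "(1 / real T) * (\<Sum>t<T. \<integral>\<omega>. fw_gap \<Omega> gF (X \<omega> t) \<partial>M)
        \<le> (1 / real T) * (\<Delta> / \<gamma> + real T * (L * \<gamma> * D\<^sup>2 / 2 + D * (Gb / sqrt (real T))))"
      using mult_left_mono[OF S, of "1 / real T"] Tp by simp
    also have "\<dots> = D / sT * (Gb + a * (1 + \<beta>))"
      unfolding \<gamma>eq \<Delta>eq sT_def[symmetric] sT2[symmetric]
      using L_pos Dp sTp \<beta>_pos ap by (simp add: field_simps power2_eq_square)
    also have "\<dots> \<le> D / sT * (Gb + 2 * a * (1 + \<beta>))"
      using Dp sTp ap \<beta>_pos by (intro mult_left_mono) auto
    finally show ?thesis unfolding sq2 sT_def by (simp add: mult.assoc)
  qed
  then show ?thesis by (simp only: X_def M_def \<gamma>_def)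
qed

end
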